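(* Let $q > r \ge 1$ be integers. If $S_1$ and $S_2$ are $K_q^r$-cliques such that $S_1 \cap S_2 = \{e\}$ for some $r$-edge $e$, then there exists an independent $K_q^r$-hinge for $S_1$ and $S_2$.
   Context: An $r$-graph is identified with its edge set; $V(G)$ denotes its vertex set. $K_q^r$ is the complete $r$-graph on $q$ vertices, and a $K_q^r$-clique is an $r$-graph isomorphic to $K_q^r$. A $K_q^r$-decomposition of an $r$-graph $G$ is a partition of the edges of $G$ into $K_q^r$-cliques. A vertex set $X$ is independent in an $r$-graph $H$ if no edge of $H$ is contained in $X$. Given two $K_q^r$-cliques $S, S'$ with $S \cap S' = \{e\}$ for an $r$-edge $e$, a $K_q^r$-hinge for $S$ and $S'$ is an $r$-graph $H$ that is edge-disjoint from $S \cup S'$ such that $H \cup (S \setminus \{e\})$ has a $K_q^r$-decomposition and $H \cup (S' \setminus \{e\})$ has a $K_q^r$-decomposition. The hinge is independent if $V(S) \cup V(S')$ is independent in $H$. *)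

theory Defs
  imports Main
begin

text \<open>An r-graph is identified with its (finite) set of edges, each edge an r-subset of vertices.\<close>
definition r_graph :: "nat \<Rightarrow> 'a set set \<Rightarrow> bool" where
  "r_graph r G \<longleftrightarrow> finite G \<and> (\<forall>f\<in>G. finite f \<and> card f = r)"

definition vertices :: "'a set set \<Rightarrow> 'a set" where
  "vertices G = \<Union>G"

definition complete_rgraph :: "nat \<Rightarrow> 'a set \<Rightarrow> 'a set set" where
  "complete_rgraph r V = {f. f \<subseteq> V \<and> card f = r}"

definition is_clique :: "nat \<Rightarrow> nat \<Rightarrow> 'a set set \<Rightarrow> bool" where
  "is_clique q r S \<longleftrightarrow> (\<exists>V. finite V \<and> card V = q \<and> S = complete_rgraph r V)"

definition has_decomposition :: "nat \<Rightarrow> nat \<Rightarrow> 'a set set \<Rightarrow> bool" where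
  "has_decomposition q r G \<longleftrightarrow>
     (\<exists>D. (\<forall>S\<in>D. is_clique q r S) \<and> pairwise disjnt D \<and> \<Union>D = G)"

definition is_hinge :: "nat \<Rightarrow> nat \<Rightarrow> 'a set set \<Rightarrow> 'a set set \<Rightarrow> 'a set \<Rightarrow> 'a set set \<Rightarrow> bool" where
  "is_hinge q r S S' e H \<longleftrightarrow>
     r_graph r H \<and> H \<inter> (S \<union> S') = {} \<and>
     has_decomposition q r (H \<union> (S - {e})) \<and>
     has_decomposition q r (H \<union> (S' - {e}))"

definition independent_in :: "'a set \<Rightarrow> 'a set set \<Rightarrow> bool" where
  "independent_in X H \<longleftrightarrow> (\<forall>f\<in>H. \<not> f \<subseteq> X)"

end

theory Submission
  imports Defs "HOL-Computational_Algebra.Primes" "HOL-Computational_Algebra.Polynomial" "HOL-Library.FuncSet"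
begin


lemma root_lemma:
  fixes P :: "int poly" and p :: nat
  assumes "prime p" "J \<subseteq> {0..<int p}" "finite J" "card J \<ge> n"
    "\<forall>i\<ge>n. coeff P i = 0" "\<forall>j\<in>J. int p dvd poly P j"
  shows "int p dvd coeff P i"
  using assms(2-)
proof (induction n arbitrary: P J i)
  case 0
  then show ?case by simp
next
  case (Suc n)
  show ?case
  proof (cases "n = 0")
    case True
    have "degree P \<le> 0" using Suc.prems(4) True by (intro degree_le) auto
    then obtain c where P: "P = [:c:]" using degree_0_id[of P] by (metis le_zero_eq)
    from Suc.prems have "J \<noteq> {}" by auto
    then obtain a where a: "a \<in> J" by auto
    have "int p dvd c" using Suc.prems(5) a P by auto
    then show ?thesis using P by (cases i) auto
  next
    case False
    from Suc.prems have "J \<noteq> {}" by auto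
    then obtain a where a: "a \<in> J" by auto
    define Q where "Q = synthetic_div P a"
    have PQ: "P = [:-a, 1:] * Q + [:poly P a:]" unfolding Q_def by (rule synthetic_div_correct'[symmetric])
    have degP: "degree P \<le> n" using Suc.prems(4) by (intro degree_le) auto
    have degQ: "degree Q = degree P - 1" unfolding Q_def by (rule degree_synthetic_div)
    have Qc: "\<forall>i\<ge>n. coeff Q i = 0"
      using degP degQ False by (intro allI impI coeff_eq_0) linarith
    have pa: "int p dvd poly P a" using Suc.prems(5) a by auto
    have pr: "prime (int p)" using assms(1) by simp
    have QJ: "\<forall>j\<in>J - {a}. int p dvd poly Q j"
    proof
      fix j assume j: "j \<in> J - {a}"
      have "poly P j = (j - a) * poly Q j + poly P a"
        by (subst PQ) (simp add: algebra_simps)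
      then have "int p dvd (j - a) * poly Q j"
        using Suc.prems(5) j pa by (metis DiffD1 add_diff_cancel_right' dvd_diff)
      moreover have "\<not> int p dvd (j - a)"
      proof
        assume "int p dvd (j - a)"
        moreover have "j - a \<noteq> 0" using j by auto
        moreover have "j \<in> {0..<int p}" "a \<in> {0..<int p}" using j a Suc.prems(1) by auto
        then have "\<bar>j - a\<bar> < int p" by auto
        ultimately show False using dvd_imp_le_int[of "j - a" "int p"] by auto
      qed
      ultimately show "int p dvd poly Q j" using pr prime_dvd_mult_iff by blast
    qed
    have cardJ: "card (J - {a}) \<ge> n" using Suc.prems(2,3) a by simp
    have IH: "\<And>i. int p dvd coeff Q i"
      using Suc.IH[of "J - {a}" Q] Suc.prems(1,2) cardJ Qc QJ by auto
    have "coeff P i = - a * coeff Q i + (case i of 0 \<Rightarrow> 0 | Suc m \<Rightarrow> coeff Q m) + (if i = 0 then poly P a else 0)"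
      by (subst PQ) (simp add: coeff_pCons split: nat.split)
    then show ?thesis using IH pa by (auto split: nat.split)
  qed
qed



definition cw :: "nat \<Rightarrow> nat \<Rightarrow> (nat \<Rightarrow> nat) \<Rightarrow> (nat \<Rightarrow> nat) \<Rightarrow> nat \<Rightarrow> nat" where
  "cw p r t c j = ((\<Sum>i<r. c i * j ^ i) + t j) mod p"

definition Cs :: "nat \<Rightarrow> nat \<Rightarrow> (nat \<Rightarrow> nat) set" where
  "Cs p r = PiE {..<r} (\<lambda>_. {..<p})"

lemma small_dvd_eq:
  fixes x y :: nat
  assumes "x < p" "y < p" "int p dvd int x - int y"
  shows "x = y"
proof (rule ccontr)
  assume "x \<noteq> y"
  then have "int x - int y \<noteq> 0" by simp
  then have "\<bar>int p\<bar> \<le> \<bar>int x - int y\<bar>" using dvd_imp_le_int assms(3) by blast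
  then show False using assms(1,2) by linarith
qed

lemma interp_unique:
  assumes "prime p" "J \<subseteq> {..<p}" "card J = r" "c \<in> Cs p r" "c' \<in> Cs p r"
    "\<forall>j\<in>J. cw p r t c j = cw p r t c' j"
  shows "c = c'"
proof -
  define P where "P = (\<Sum>i<r. monom (int (c i) - int (c' i)) i)"
  have coeffP: "coeff P i = (if i < r then int (c i) - int (c' i) else 0)" for i
    unfolding P_def by (simp add: coeff_sum coeff_monom)
  have polyP: "poly P (int j) = int (\<Sum>i<r. c i * j^i) - int (\<Sum>i<r. c' i * j^i)" for j
    unfolding P_def by (simp add: poly_sum poly_monom of_nat_sum sum_subtractf[symmetric] left_diff_distrib)
  have fin: "finite J" using assms(2) finite_subset by blast
  have dv: "\<forall>j\<in>int ` J. int p dvd poly P j"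
  proof
    fix j' assume "j' \<in> int ` J"
    then obtain j where j: "j \<in> J" "j' = int j" by auto
    define A where "A = (\<Sum>i<r. c i * j^i)"
    define B where "B = (\<Sum>i<r. c' i * j^i)"
    have "cw p r t c j = cw p r t c' j" using assms(6) j(1) by blast
    then have "(A + t j) mod p = (B + t j) mod p" unfolding cw_def A_def B_def by simp
    then have "int ((A + t j) mod p) = int ((B + t j) mod p)" by simp
    then have "(int A + int (t j)) mod int p = (int B + int (t j)) mod int p"
      by (simp add: of_nat_mod)
    then have "int p dvd (int A + int (t j)) - (int B + int (t j))"
      using mod_eq_dvd_iff by blast
    then show "int p dvd poly P j'" using j polyP unfolding A_def B_def by simp
  qed
  have cardJ: "card (int ` J) = r" using assms(3) by (simp add: card_image)
  have sub: "int ` J \<subseteq> {0..<int p}" using assms(2) by auto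
  have allc: "int p dvd coeff P i" for i
    by (rule root_lemma[OF assms(1) sub finite_imageI[OF fin], of r]) (use cardJ coeffP dv in auto)
  show "c = c'"
  proof
    fix i
    show "c i = c' i"
    proof (cases "i < r")
      case True
      have "c i \<in> {..<p}" using PiE_mem[OF assms(4)[unfolded Cs_def], of i] True by simp
      moreover have "c' i \<in> {..<p}" using PiE_mem[OF assms(5)[unfolded Cs_def], of i] True by simp
      ultimately have "c i < p" "c' i < p" by auto
      moreover have "int p dvd int (c i) - int (c' i)" using allc[of i] coeffP[of i] True by simp
      ultimately show ?thesis by (rule small_dvd_eq)
    next
      case False
      have "c i = undefined" using PiE_arb[OF assms(4)[unfolded Cs_def], of i] False by simp
      moreover have "c' i = undefined" using PiE_arb[OF assms(5)[unfolded Cs_def], of i] False by simp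
      ultimately show ?thesis by simp
    qed
  qed
qed
lemma cw_less: "p > 0 \<Longrightarrow> cw p r t c j < p"
  unfolding cw_def by simp

lemma interp_exists:
  assumes "prime p" "J \<subseteq> {..<p}" "card J = r" "v \<in> PiE J (\<lambda>_. {..<p})"
  shows "\<exists>c\<in>Cs p r. \<forall>j\<in>J. cw p r t c j = v j"
proof -
  have p0: "p > 0" using assms(1) prime_gt_0_nat by blast
  have fin: "finite J" using assms(2) finite_subset by blast
  define \<Phi> where "\<Phi> c = restrict (cw p r t c) J" for c
  have inj: "inj_on \<Phi> (Cs p r)"
  proof (rule inj_onI)
    fix c c' assume "c \<in> Cs p r" "c' \<in> Cs p r" "\<Phi> c = \<Phi> c'"
    moreover have "\<forall>j\<in>J. cw p r t c j = cw p r t c' j"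
    proof
      fix j assume "j \<in> J"
      have "\<Phi> c j = \<Phi> c' j" using \<open>\<Phi> c = \<Phi> c'\<close> by simp
      then show "cw p r t c j = cw p r t c' j" using \<open>j \<in> J\<close> unfolding \<Phi>_def by simp
    qed
    ultimately show "c = c'" using interp_unique[OF assms(1-3)] by blast
  qed
  have sub: "\<Phi> ` Cs p r \<subseteq> PiE J (\<lambda>_. {..<p})"
    unfolding \<Phi>_def using cw_less[OF p0] by auto
  have c1: "card (Cs p r) = p ^ r" unfolding Cs_def by (simp add: card_PiE)
  have c2: "card (PiE J (\<lambda>_. {..<p})) = p ^ r" using fin assms(3) by (simp add: card_PiE)
  have "card (\<Phi> ` Cs p r) = p ^ r" using inj c1 by (simp add: card_image)
  then have "\<Phi> ` Cs p r = PiE J (\<lambda>_. {..<p})"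
    using sub c2 by (intro card_subset_eq) (auto simp: fin finite_PiE)
  then have "v \<in> \<Phi> ` Cs p r" using assms(4) by simp
  then obtain c where c: "c \<in> Cs p r" "\<Phi> c = v" by blast
  have "\<forall>j\<in>J. cw p r t c j = v j"
  proof
    fix j assume "j \<in> J"
    have "\<Phi> c j = v j" using c(2) by simp
    then show "cw p r t c j = v j" using \<open>j \<in> J\<close> unfolding \<Phi>_def by simp
  qed
  then show ?thesis using c(1) by blast
qed



definition blk :: "nat \<Rightarrow> nat \<Rightarrow> nat \<Rightarrow> (nat\<Rightarrow>nat) \<Rightarrow> (nat\<Rightarrow>nat) \<Rightarrow> (nat\<times>nat) set" where
  "blk p q r t c = (\<lambda>j. (j, cw p r t c j)) ` {..<q}"

definition Tr :: "nat \<Rightarrow> nat \<Rightarrow> nat \<Rightarrow> (nat\<Rightarrow>nat) \<Rightarrow> (nat\<times>nat) set set set" where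
  "Tr p q r t = (\<lambda>c. complete_rgraph r (blk p q r t c)) ` Cs p r"

definition Og :: "nat \<Rightarrow> nat \<Rightarrow> nat \<Rightarrow> (nat\<times>nat) set set" where
  "Og p q r = {f. f \<subseteq> {..<q} \<times> {..<p} \<and> card f = r \<and> inj_on fst f}"

lemma K_inter: "complete_rgraph r (X \<inter> Y) = complete_rgraph r X \<inter> complete_rgraph r Y"
  unfolding complete_rgraph_def by auto

lemma K_self: "finite X \<Longrightarrow> card X = r \<Longrightarrow> complete_rgraph r X = {X}"
  unfolding complete_rgraph_def using card_subset_eq[of X] by auto

lemma in_blk: "x \<in> blk p q r t c \<longleftrightarrow> fst x < q \<and> snd x = cw p r t c (fst x)"
  unfolding blk_def by (cases x) auto

lemma blk_sub: "p > 0 \<Longrightarrow> blk p q r t c \<subseteq> {..<q} \<times> {..<p}"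
  using cw_less by (auto simp: in_blk)

lemma blk_inj: "inj_on fst (blk p q r t c)"
  by (auto simp: inj_on_def in_blk intro: prod_eqI)

lemma blk_card: "card (blk p q r t c) = q"
  unfolding blk_def by (subst card_image) (auto intro: inj_onI)

lemma Tr_disj:
  assumes "prime p" "q \<le> p"
  shows "pairwise disjnt (Tr p q r t)"
proof (rule pairwiseI)
  fix S S' assume S: "S \<in> Tr p q r t" and S': "S' \<in> Tr p q r t" and ne: "S \<noteq> S'"
  obtain c where c: "c \<in> Cs p r" "S = complete_rgraph r (blk p q r t c)" using S unfolding Tr_def by auto
  obtain c' where c': "c' \<in> Cs p r" "S' = complete_rgraph r (blk p q r t c')" using S' unfolding Tr_def by auto
  show "disjnt S S'"
  proof (rule ccontr)
    assume "\<not> disjnt S S'"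
    then obtain f where f: "f \<in> S" "f \<in> S'" unfolding disjnt_def by auto
    have f1: "f \<subseteq> blk p q r t c" "card f = r" using f(1) c(2) unfolding complete_rgraph_def by auto
    have f2: "f \<subseteq> blk p q r t c'" using f(2) c'(2) unfolding complete_rgraph_def by auto
    have inj: "inj_on fst f" using blk_inj f1(1) inj_on_subset by blast
    have J: "fst ` f \<subseteq> {..<p}" using f1(1) assms(2) by (auto simp: in_blk)
    have cJ: "card (fst ` f) = r" using inj f1(2) by (simp add: card_image)
    have "\<forall>j\<in>fst ` f. cw p r t c j = cw p r t c' j"
    proof
      fix j assume "j \<in> fst ` f"
      then obtain x where x: "x \<in> f" "j = fst x" by auto
      then have "snd x = cw p r t c j" "snd x = cw p r t c' j" using f1(1) f2 by (auto simp: in_blk)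
      then show "cw p r t c j = cw p r t c' j" by simp
    qed
    then have "c = c'" using interp_unique[OF assms(1) J cJ c(1) c'(1)] by blast
    then show False using ne c c' by simp
  qed
qed

lemma Tr_Union:
  assumes "prime p" "q \<le> p"
  shows "\<Union>(Tr p q r t) = Og p q r"
proof
  have p0: "p > 0" using assms(1) prime_gt_0_nat by blast
  show "\<Union>(Tr p q r t) \<subseteq> Og p q r"
  proof
    fix f assume "f \<in> \<Union>(Tr p q r t)"
    then obtain c where "f \<in> complete_rgraph r (blk p q r t c)" unfolding Tr_def by auto
    then have f: "f \<subseteq> blk p q r t c" "card f = r" unfolding complete_rgraph_def by auto
    then show "f \<in> Og p q r" unfolding Og_def using blk_sub[OF p0] blk_inj inj_on_subset by blast
  qed
  show "Og p q r \<subseteq> \<Union>(Tr p q r t)"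
  proof
    fix f assume "f \<in> Og p q r"
    then have f: "f \<subseteq> {..<q} \<times> {..<p}" "card f = r" "inj_on fst f" unfolding Og_def by auto
    define J where "J = fst ` f"
    have J: "J \<subseteq> {..<p}" using f(1) assms(2) unfolding J_def by auto
    have cJ: "card J = r" using f(2,3) unfolding J_def by (simp add: card_image)
    define v where "v = restrict (\<lambda>j. THE y. (j, y) \<in> f) J"
    have the: "(THE y. (fst x, y) \<in> f) = snd x" if "x \<in> f" for x
    proof (rule the_equality)
      show "(fst x, snd x) \<in> f" using that by simp
      fix y assume "(fst x, y) \<in> f"
      then have "(fst x, y) = x" using inj_onD[OF f(3) _ _ that] by auto
      then show "y = snd x" by (metis snd_conv)
    qed
    have "v \<in> PiE J (\<lambda>_. {..<p})"
    proof -
      have "v j \<in> {..<p}" if "j \<in> J" for j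
      proof -
        obtain x where x: "x \<in> f" "j = fst x" using \<open>j \<in> J\<close> unfolding J_def by auto
        have "v j = snd x" unfolding v_def using that x the by simp
        moreover have "snd x < p" using x f(1) by auto
        ultimately show ?thesis by simp
      qed
      then show ?thesis unfolding v_def by auto
    qed
    then obtain c where c: "c \<in> Cs p r" "\<forall>j\<in>J. cw p r t c j = v j"
      using interp_exists[OF assms(1) J cJ] by blast
    have "f \<subseteq> blk p q r t c"
    proof
      fix x assume x: "x \<in> f"
      have "fst x \<in> J" using x unfolding J_def by auto
      then have "v (fst x) = snd x" unfolding v_def using the x by simp
      moreover have "fst x < q" using x f(1) by auto
      ultimately show "x \<in> blk p q r t c" using c(2) \<open>fst x \<in> J\<close> by (simp add: in_blk)
    qed
    then have "f \<in> complete_rgraph r (blk p q r t c)" using f(2) unfolding complete_rgraph_def by auto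
    then show "f \<in> \<Union>(Tr p q r t)" using c(1) unfolding Tr_def by auto
  qed
qed



lemma K_image:
  assumes "inj_on \<phi> D" "V \<subseteq> D"
  shows "complete_rgraph r (\<phi> ` V) = (image \<phi>) ` complete_rgraph r V"
proof
  show "(image \<phi>) ` complete_rgraph r V \<subseteq> complete_rgraph r (\<phi> ` V)"
  proof
    fix g assume "g \<in> (image \<phi>) ` complete_rgraph r V"
    then obtain f where f: "f \<subseteq> V" "card f = r" "g = \<phi> ` f" unfolding complete_rgraph_def by auto
    have "inj_on \<phi> f" using assms f(1) inj_on_subset by blast
    then have "card g = r" using f by (simp add: card_image)
    then show "g \<in> complete_rgraph r (\<phi> ` V)" using f unfolding complete_rgraph_def by auto
  qed
  show "complete_rgraph r (\<phi> ` V) \<subseteq> (image \<phi>) ` complete_rgraph r V"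
  proof
    fix g assume "g \<in> complete_rgraph r (\<phi> ` V)"
    then have g: "g \<subseteq> \<phi> ` V" "card g = r" unfolding complete_rgraph_def by auto
    then obtain f where f: "f \<subseteq> V" "g = \<phi> ` f" using g(1) unfolding subset_image_iff by blast
    have "inj_on \<phi> f" using assms f(1) inj_on_subset by blast
    then have "card f = r" using f g(2) by (simp add: card_image)
    then show "g \<in> (image \<phi>) ` complete_rgraph r V" using f unfolding complete_rgraph_def by auto
  qed
qed

lemma decomp_transfer:
  assumes inj: "inj_on \<phi> D"
    and cl: "\<forall>S\<in>\<D>. \<exists>V. V \<subseteq> D \<and> finite V \<and> card V = q \<and> S = complete_rgraph r V"
    and pw: "pairwise disjnt \<D>"
  shows "has_decomposition q r ((image \<phi>) ` \<Union>\<D>)"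
proof -
  define \<D>' where "\<D>' = (\<lambda>S. (image \<phi>) ` S) ` \<D>"
  have injP: "inj_on (image \<phi>) (Pow D)" using inj by (rule inj_on_image_Pow)
  have subP: "S \<subseteq> Pow D" if SD: "S \<in> \<D>" for S
  proof -
    obtain V where "V \<subseteq> D" "finite V" "card V = q" "S = complete_rgraph r V" using bspec[OF cl SD] by blast
    then show ?thesis unfolding complete_rgraph_def by auto
  qed
  have "\<forall>S\<in>\<D>'. is_clique q r S"
  proof
    fix S' assume "S' \<in> \<D>'"
    then obtain S where S: "S \<in> \<D>" "S' = (image \<phi>) ` S" unfolding \<D>'_def by auto
    obtain V where V: "V \<subseteq> D" "finite V" "card V = q" "S = complete_rgraph r V" using cl S(1) by blast
    have eq: "S' = complete_rgraph r (\<phi> ` V)" using K_image[OF inj V(1)] S(2) V(4) by simp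
    have "inj_on \<phi> V" using inj V(1) inj_on_subset by blast
    then have "card (\<phi> ` V) = q" using V(3) by (simp add: card_image)
    then show "is_clique q r S'" unfolding is_clique_def using finite_imageI[OF V(2)] eq by blast
  qed
  moreover have "pairwise disjnt \<D>'"
  proof (rule pairwiseI)
    fix X Y assume X: "X \<in> \<D>'" and Y: "Y \<in> \<D>'" and ne: "X \<noteq> Y"
    obtain S where S: "S \<in> \<D>" "X = (image \<phi>) ` S" using X unfolding \<D>'_def by auto
    obtain T where T: "T \<in> \<D>" "Y = (image \<phi>) ` T" using Y unfolding \<D>'_def by auto
    have "S \<noteq> T" using ne S T by auto
    then have "S \<inter> T = {}" using pw S(1) T(1) unfolding pairwise_def disjnt_def by blast
    then have "(image \<phi>) ` S \<inter> (image \<phi>) ` T = {}"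
      using inj_on_image_Int[OF injP subP[OF S(1)] subP[OF T(1)]] by simp
    then show "disjnt X Y" using S T unfolding disjnt_def by simp
  qed
  moreover have "\<Union>\<D>' = (image \<phi>) ` \<Union>\<D>" unfolding \<D>'_def by (simp add: image_Union)
  ultimately show ?thesis unfolding has_decomposition_def by blast
qed

lemma Union_minus:
  assumes "pairwise disjnt T" "B \<in> T"
  shows "\<Union>(T - {B}) = \<Union>T - B"
proof
  show "\<Union>(T - {B}) \<subseteq> \<Union>T - B"
  proof
    fix x assume "x \<in> \<Union>(T - {B})"
    then obtain S where S: "S \<in> T" "S \<noteq> B" "x \<in> S" by auto
    then have "disjnt S B" using assms unfolding pairwise_def by blast
    then show "x \<in> \<Union>T - B" using S unfolding disjnt_def by auto
  qed
  show "\<Union>T - B \<subseteq> \<Union>(T - {B})" by auto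
qed



lemma weak_hinge:
  fixes U1 U2 e W :: "'a set"
  assumes inf: "infinite (UNIV::'a set)" and r1: "1 \<le> r" and rq: "r < q" and finW: "finite W"
    and fU1: "finite U1" and fU2: "finite U2" and cU1: "card U1 = q" and cU2: "card U2 = q"
    and int: "U1 \<inter> U2 = e" and ce: "card e = r"
  shows "\<exists>H F. finite F \<and> F \<inter> W = {} \<and> (\<forall>f\<in>H. f \<subseteq> U1 \<union> U2 \<union> F) \<and> r_graph r H \<and>
     H \<inter> (complete_rgraph r U1 \<union> complete_rgraph r U2) = {} \<and>
     has_decomposition q r (H \<union> (complete_rgraph r U1 - {e})) \<and>
     has_decomposition q r (H \<union> (complete_rgraph r U2 - {e}))"
proof -
  obtain p where p: "prime p" "q < p" using bigger_prime by blast
  have p2: "2 \<le> p" using p(1) prime_ge_2_nat by blast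
  have qp: "q \<le> p" using p(2) by simp
  define D where "D = {..<q} \<times> {..<p}"
  define c0 :: "nat \<Rightarrow> nat" where "c0 = (\<lambda>i. if i < r then 0 else undefined)"
  define t0 :: "nat \<Rightarrow> nat" where "t0 = (\<lambda>_. 0)"
  define t1 :: "nat \<Rightarrow> nat" where "t1 = (\<lambda>j. if j < r then 0 else 1)"
  define Pe where "Pe = (\<lambda>j. (j, 0::nat)) ` {..<r}"
  define P1 where "P1 = (\<lambda>j. (j, 0::nat)) ` {r..<q}"
  define P2 where "P2 = (\<lambda>j. (j, 1::nat)) ` {r..<q}"
  define Pf where "Pf = D - (Pe \<union> P1 \<union> P2)"
  have c0C: "c0 \<in> Cs p r" unfolding c0_def Cs_def using p2 by (auto simp: PiE_def extensional_def)
  have cw0: "cw p r t0 c0 j = 0" for j unfolding cw_def c0_def t0_def by simp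
  have cw1: "cw p r t1 c0 j = (if j < r then 0 else 1)" for j unfolding cw_def c0_def t1_def using p2 by simp
  have qsplit: "{..<q} = {..<r} \<union> {r..<q}" using rq by auto
  have B0: "blk p q r t0 c0 = Pe \<union> P1"
    unfolding blk_def cw0 Pe_def P1_def qsplit image_Un by simp
  have B1: "blk p q r t1 c0 = Pe \<union> P2"
  proof -
    have "blk p q r t1 c0 = (\<lambda>j. (j, cw p r t1 c0 j)) ` {..<r} \<union> (\<lambda>j. (j, cw p r t1 c0 j)) ` {r..<q}"
      unfolding blk_def qsplit image_Un by simp
    also have "(\<lambda>j. (j, cw p r t1 c0 j)) ` {..<r} = Pe"
      unfolding Pe_def by (rule image_cong) (auto simp: cw1)
    also have "(\<lambda>j. (j, cw p r t1 c0 j)) ` {r..<q} = P2"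
      unfolding P2_def by (rule image_cong) (auto simp: cw1)
    finally show ?thesis .
  qed
  have injA: "inj_on (\<lambda>j::nat. (j, a::nat)) A" for a A by (rule inj_onI) simp
  have dPe1: "Pe \<inter> P1 = {}" unfolding Pe_def P1_def by auto
  have dPe2: "Pe \<inter> P2 = {}" unfolding Pe_def P2_def by auto
  have d12: "P1 \<inter> P2 = {}" unfolding P1_def P2_def by auto
  have sPe: "Pe \<subseteq> D" unfolding Pe_def D_def using rq p2 by auto
  have sP1: "P1 \<subseteq> D" unfolding P1_def D_def using rq p2 by auto
  have sP2: "P2 \<subseteq> D" unfolding P2_def D_def using rq p2 by auto
  have finD: "finite D" unfolding D_def by simp
  have Deq: "D = Pe \<union> P1 \<union> P2 \<union> Pf" unfolding Pf_def using sPe sP1 sP2 by blast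
  have finPf: "finite Pf" unfolding Pf_def using finD by simp
  have cPe: "card Pe = r" unfolding Pe_def by (simp add: card_image[OF injA])
  have cP1: "card P1 = q - r" unfolding P1_def by (simp add: card_image[OF injA])
  have cP2: "card P2 = q - r" unfolding P2_def by (simp add: card_image[OF injA])
  have eU1: "e \<subseteq> U1" and eU2: "e \<subseteq> U2" using int by auto
  have fe: "finite e" using fU1 eU1 finite_subset by blast
  have cU1e: "card (U1 - e) = q - r" using card_Diff_subset[OF fe eU1] cU1 ce by simp
  have cU2e: "card (U2 - e) = q - r" using card_Diff_subset[OF fe eU2] cU2 ce by simp
  have "finite (W \<union> U1 \<union> U2)" using finW fU1 fU2 by simp
  then have "infinite (UNIV - (W \<union> U1 \<union> U2))" by (rule Diff_infinite_finite[OF _ inf])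
  then have "\<exists>B. finite B \<and> card B = card Pf \<and> B \<subseteq> UNIV - (W \<union> U1 \<union> U2)"
    by (rule infinite_arbitrarily_large)
  then obtain F where F: "finite F" "card F = card Pf" "F \<subseteq> UNIV - (W \<union> U1 \<union> U2)"
    by auto
  have "finite Pe" unfolding Pe_def by simp
  then have "\<exists>h. bij_betw h Pe (e)" using cPe ce fe by (intro finite_same_card_bij) auto
  then obtain he where he: "bij_betw he Pe (e)" by blast
  have "finite P1" unfolding P1_def by simp
  then have "\<exists>h. bij_betw h P1 (U1 - e)" using cP1 cU1e fU1 by (intro finite_same_card_bij) auto
  then obtain h1 where h1: "bij_betw h1 P1 (U1 - e)" by blast
  have "finite P2" unfolding P2_def by simp
  then have "\<exists>h. bij_betw h P2 (U2 - e)" using cP2 cU2e fU2 by (intro finite_same_card_bij) auto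
  then obtain h2 where h2: "bij_betw h2 P2 (U2 - e)" by blast
  have "\<exists>h. bij_betw h Pf F" using F(1,2) finPf by (intro finite_same_card_bij) auto
  then obtain hf where hf: "bij_betw hf Pf F" by blast
  define \<phi> where "\<phi> x = (if x \<in> Pe then he x else if x \<in> P1 then h1 x else if x \<in> P2 then h2 x else hf x)" for x
  have bPe: "bij_betw \<phi> Pe e" using he by (rule bij_betw_cong[THEN iffD2, rotated]) (simp add: \<phi>_def)
  have bP1: "bij_betw \<phi> P1 (U1 - e)" using h1
    by (rule bij_betw_cong[THEN iffD2, rotated]) (use dPe1 in \<open>auto simp: \<phi>_def\<close>)
  have bP2: "bij_betw \<phi> P2 (U2 - e)" using h2
    by (rule bij_betw_cong[THEN iffD2, rotated]) (use dPe2 d12 in \<open>auto simp: \<phi>_def\<close>)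
  have bPf: "bij_betw \<phi> Pf F" using hf
    by (rule bij_betw_cong[THEN iffD2, rotated]) (auto simp: \<phi>_def Pf_def)
  have b01: "bij_betw \<phi> (Pe \<union> P1) (e \<union> (U1 - e))"
    by (rule bij_betw_combine[OF bPe bP1]) auto
  have b02: "bij_betw \<phi> (Pe \<union> P2) (e \<union> (U2 - e))"
    by (rule bij_betw_combine[OF bPe bP2]) auto
  have b012: "bij_betw \<phi> (Pe \<union> P1 \<union> P2) (e \<union> (U1 - e) \<union> (U2 - e))"
    by (rule bij_betw_combine[OF b01 bP2]) (use int in auto)
  have b0123: "bij_betw \<phi> (Pe \<union> P1 \<union> P2 \<union> Pf) (e \<union> (U1 - e) \<union> (U2 - e) \<union> F)"
    by (rule bij_betw_combine[OF b012 bPf]) (use F(3) eU1 in auto)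
  have bD: "bij_betw \<phi> D (U1 \<union> U2 \<union> F)"
  proof -
    have "e \<union> (U1 - e) \<union> (U2 - e) \<union> F = U1 \<union> U2 \<union> F" using eU1 eU2 by auto
    then show ?thesis using b0123 Deq by simp
  qed
  have inj: "inj_on \<phi> D" using bD bij_betw_imp_inj_on by blast
  have imgD: "\<phi> ` D = U1 \<union> U2 \<union> F" using bD bij_betw_imp_surj_on by blast
  have imgPe: "\<phi> ` Pe = e" using bPe bij_betw_imp_surj_on by blast
  have imgB0: "\<phi> ` (Pe \<union> P1) = U1" using b01 bij_betw_imp_surj_on eU1 by blast
  have imgB1: "\<phi> ` (Pe \<union> P2) = U2" using b02 bij_betw_imp_surj_on eU2 by blast
  define A where "A = complete_rgraph r (Pe \<union> P1)"
  define B where "B = complete_rgraph r (Pe \<union> P2)"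
  have AT: "A \<in> Tr p q r t0" unfolding A_def Tr_def
    by (rule image_eqI[where x=c0]) (simp_all add: B0 c0C)
  have BT: "B \<in> Tr p q r t1" unfolding B_def Tr_def
    by (rule image_eqI[where x=c0]) (simp_all add: B1 c0C)
  have OgU0: "\<Union>(Tr p q r t0) = Og p q r" by (rule Tr_Union[OF p(1) qp])
  have OgU1: "\<Union>(Tr p q r t1) = Og p q r" by (rule Tr_Union[OF p(1) qp])
  have dis0: "pairwise disjnt (Tr p q r t0)" by (rule Tr_disj[OF p(1) qp])
  have dis1: "pairwise disjnt (Tr p q r t1)" by (rule Tr_disj[OF p(1) qp])
  have AO: "A \<subseteq> Og p q r" using AT OgU0 by blast
  have BO: "B \<subseteq> Og p q r" using BT OgU1 by blast
  have finPe: "finite Pe" unfolding Pe_def by simp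
  have "(Pe \<union> P1) \<inter> (Pe \<union> P2) = Pe" using d12 by blast
  then have AB: "A \<inter> B = {Pe}" unfolding A_def B_def
    using K_inter[of r "Pe \<union> P1" "Pe \<union> P2"] K_self[OF finPe cPe] by simp
  define H0 where "H0 = Og p q r - A - B"
  have eq1: "H0 \<union> (A - {Pe}) = \<Union>(Tr p q r t1 - {B})"
  proof -
    have "\<Union>(Tr p q r t1 - {B}) = Og p q r - B" using Union_minus[OF dis1 BT] OgU1 by simp
    moreover have "H0 \<union> (A - {Pe}) = Og p q r - B" unfolding H0_def using AO AB by blast
    ultimately show ?thesis by simp
  qed
  have eq2: "H0 \<union> (B - {Pe}) = \<Union>(Tr p q r t0 - {A})"
  proof -
    have "\<Union>(Tr p q r t0 - {A}) = Og p q r - A" using Union_minus[OF dis0 AT] OgU0 by simp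
    moreover have "H0 \<union> (B - {Pe}) = Og p q r - A" unfolding H0_def using BO AB by blast
    ultimately show ?thesis by simp
  qed
  have OgD: "Og p q r \<subseteq> Pow D" unfolding Og_def D_def by auto
  have finOg: "finite (Og p q r)" using OgD finD finite_subset by blast
  have injP: "inj_on (image \<phi>) (Pow D)" using inj by (rule inj_on_image_Pow)
  define H where "H = (image \<phi>) ` H0"
  have KU1: "complete_rgraph r U1 = (image \<phi>) ` A"
    using K_image[OF inj, of "Pe \<union> P1" r] imgB0 sPe sP1 unfolding A_def by simp
  have KU2: "complete_rgraph r U2 = (image \<phi>) ` B"
    using K_image[OF inj, of "Pe \<union> P2" r] imgB1 sPe sP2 unfolding B_def by simp
  have p0: "0 < p" using p2 by simp
  have clTr: "\<forall>S\<in>Tr p q r t - {X}. \<exists>V. V \<subseteq> D \<and> finite V \<and> card V = q \<and> S = complete_rgraph r V" for t X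
  proof
    fix S assume "S \<in> Tr p q r t - {X}"
    then obtain c where c: "S = complete_rgraph r (blk p q r t c)" unfolding Tr_def by auto
    have "blk p q r t c \<subseteq> D" unfolding D_def by (rule blk_sub[OF p0])
    moreover have "finite (blk p q r t c)" unfolding blk_def by simp
    moreover have "card (blk p q r t c) = q" by (rule blk_card)
    ultimately show "\<exists>V. V \<subseteq> D \<and> finite V \<and> card V = q \<and> S = complete_rgraph r V" using c by blast
  qed
  have AD: "A \<subseteq> Pow D" and BD: "B \<subseteq> Pow D" and H0D: "H0 \<subseteq> Pow D"
    using AO BO OgD unfolding H0_def by auto
  have dec1: "has_decomposition q r (H \<union> (complete_rgraph r U1 - {e}))"
  proof -
    have "(image \<phi>) ` (A - {Pe}) = (image \<phi>) ` A - (image \<phi>) ` {Pe}"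
      by (rule inj_on_image_set_diff[OF injP]) (use AD sPe in auto)
    then have "H \<union> (complete_rgraph r U1 - {e}) = (image \<phi>) ` (H0 \<union> (A - {Pe}))"
      unfolding H_def KU1 using imgPe by (simp add: image_Un)
    also have "\<dots> = (image \<phi>) ` \<Union>(Tr p q r t1 - {B})" using eq1 by simp
    finally show ?thesis using decomp_transfer[OF inj clTr pairwise_subset[OF dis1]] by auto
  qed
  have dec2: "has_decomposition q r (H \<union> (complete_rgraph r U2 - {e}))"
  proof -
    have "(image \<phi>) ` (B - {Pe}) = (image \<phi>) ` B - (image \<phi>) ` {Pe}"
      by (rule inj_on_image_set_diff[OF injP]) (use BD sPe in auto)
    then have "H \<union> (complete_rgraph r U2 - {e}) = (image \<phi>) ` (H0 \<union> (B - {Pe}))"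
      unfolding H_def KU2 using imgPe by (simp add: image_Un)
    also have "\<dots> = (image \<phi>) ` \<Union>(Tr p q r t0 - {A})" using eq2 by simp
    finally show ?thesis using decomp_transfer[OF inj clTr pairwise_subset[OF dis0]] by auto
  qed
  have rg: "r_graph r H"
    unfolding r_graph_def
  proof
    show "finite H" unfolding H_def H0_def using finOg by simp
    show "\<forall>f\<in>H. finite f \<and> card f = r"
    proof
      fix f assume "f \<in> H"
      then obtain g where g: "g \<in> H0" "f = \<phi> ` g" unfolding H_def by auto
      have gD: "g \<subseteq> D" using g(1) H0D by auto
      have cg: "card g = r" using g(1) unfolding H0_def Og_def by auto
      have "inj_on \<phi> g" using inj gD inj_on_subset by blast
      then have "card f = r" using g(2) cg by (simp add: card_image)
      moreover have "finite f" using g(2) gD finD finite_subset by blast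
      ultimately show "finite f \<and> card f = r" by simp
    qed
  qed
  have disj: "H \<inter> (complete_rgraph r U1 \<union> complete_rgraph r U2) = {}"
  proof -
    have "(image \<phi>) ` (H0 \<inter> (A \<union> B)) = (image \<phi>) ` H0 \<inter> (image \<phi>) ` (A \<union> B)"
      by (rule inj_on_image_Int[OF injP]) (use H0D AD BD in auto)
    moreover have "H0 \<inter> (A \<union> B) = {}" unfolding H0_def by blast
    ultimately show ?thesis unfolding H_def KU1 KU2 by (simp add: image_Un)
  qed
  have vert: "\<forall>f\<in>H. f \<subseteq> U1 \<union> U2 \<union> F"
  proof
    fix f assume "f \<in> H"
    then obtain g where g: "g \<in> H0" "f = \<phi> ` g" unfolding H_def by auto
    have gD: "g \<subseteq> D" using g(1) H0D by auto
    then show "f \<subseteq> U1 \<union> U2 \<union> F" using g(2) imgD by blast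
  qed
  have FW: "F \<inter> W = {}" using F(3) by blast
  show ?thesis using F(1) FW vert rg disj dec1 dec2 by blast
qed



lemma decomp_union:
  assumes "has_decomposition q r G1" "has_decomposition q r G2" "G1 \<inter> G2 = {}"
  shows "has_decomposition q r (G1 \<union> G2)"
proof -
  obtain D1 where D1: "\<forall>S\<in>D1. is_clique q r S" "pairwise disjnt D1" "\<Union>D1 = G1"
    using assms(1) unfolding has_decomposition_def by blast
  obtain D2 where D2: "\<forall>S\<in>D2. is_clique q r S" "pairwise disjnt D2" "\<Union>D2 = G2"
    using assms(2) unfolding has_decomposition_def by blast
  have "pairwise disjnt (D1 \<union> D2)"
  proof (rule pairwiseI)
    fix S T assume S: "S \<in> D1 \<union> D2" and T: "T \<in> D1 \<union> D2" and ne: "S \<noteq> T"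
    show "disjnt S T"
    proof (cases "S \<in> D1")
      case True
      show ?thesis
      proof (cases "T \<in> D1")
        case True
        then show ?thesis using \<open>S \<in> D1\<close> D1(2) ne unfolding pairwise_def by blast
      next
        case False
        then have "T \<in> D2" using T by blast
        then have "T \<subseteq> G2" "S \<subseteq> G1" using D2(3) D1(3) \<open>S \<in> D1\<close> by auto
        then show ?thesis using assms(3) unfolding disjnt_def by blast
      qed
    next
      case False
      then have SD2: "S \<in> D2" using S by blast
      show ?thesis
      proof (cases "T \<in> D2")
        case True
        then show ?thesis using SD2 D2(2) ne unfolding pairwise_def by blast
      next
        case False
        then have "T \<in> D1" using T by blast
        then have "T \<subseteq> G1" "S \<subseteq> G2" using D2(3) D1(3) SD2 by auto
        then show ?thesis using assms(3) unfolding disjnt_def by blast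
      qed
    qed
  qed
  moreover have "\<forall>S\<in>D1 \<union> D2. is_clique q r S" using D1(1) D2(1) by blast
  moreover have "\<Union>(D1 \<union> D2) = G1 \<union> G2" using D1(3) D2(3) by auto
  ultimately show ?thesis unfolding has_decomposition_def by blast
qed

lemma inK: "f \<subseteq> X \<Longrightarrow> card f = r \<Longrightarrow> f \<in> complete_rgraph r X"
  unfolding complete_rgraph_def by simp

lemma sub_e: "f \<subseteq> e \<Longrightarrow> card f = r \<Longrightarrow> card e = r \<Longrightarrow> finite e \<Longrightarrow> f = e"
  using card_subset_eq by metis

theorem lemma2p5:
  fixes S1 S2 :: "'a set set" and e :: "'a set" and q r :: nat
  assumes "infinite (UNIV :: 'a set)"
    and "1 \<le> r" and "r < q"
    and "is_clique q r S1" and "is_clique q r S2"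
    and "S1 \<inter> S2 = {e}"
  shows "\<exists>H. is_hinge q r S1 S2 e H \<and> independent_in (vertices S1 \<union> vertices S2) H"
proof -
  note inf = assms(1) and r1 = assms(2) and rq = assms(3)
  obtain V1 where V1: "finite V1" "card V1 = q" "S1 = complete_rgraph r V1"
    using assms(4) unfolding is_clique_def by blast
  obtain V2 where V2: "finite V2" "card V2 = q" "S2 = complete_rgraph r V2"
    using assms(5) unfolding is_clique_def by blast
  have eS: "e \<in> S1" "e \<in> S2" using assms(6) by auto
  have eV1: "e \<subseteq> V1" and ce: "card e = r" using eS(1) V1(3) unfolding complete_rgraph_def by auto
  have eV2: "e \<subseteq> V2" using eS(2) V2(3) unfolding complete_rgraph_def by auto
  have fe: "finite e" using V1(1) eV1 finite_subset by blast
  have int: "V1 \<inter> V2 = e"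
  proof (rule ccontr)
    assume "V1 \<inter> V2 \<noteq> e"
    then obtain x where x: "x \<in> V1" "x \<in> V2" "x \<notin> e" using eV1 eV2 by blast
    have "e \<noteq> {}" using ce r1 by auto
    then obtain y where y: "y \<in> e" by blast
    define f where "f = insert x (e - {y})"
    have "card (e - {y}) = r - 1" using ce y fe by simp
    then have cf: "card f = r" unfolding f_def using x(3) fe r1 by simp
    have "f \<subseteq> V1" "f \<subseteq> V2" unfolding f_def using x eV1 eV2 by auto
    then have "f \<in> S1 \<inter> S2" using cf V1(3) V2(3) inK by blast
    then have "f = e" using assms(6) by blast
    then show False using x(3) unfolding f_def by blast
  qed
  have "finite (V1 \<union> V2)" using V1(1) V2(1) by simp
  then have "infinite (UNIV - (V1 \<union> V2))" by (rule Diff_infinite_finite[OF _ inf])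
  then have "\<exists>B. finite B \<and> card B = q - r \<and> B \<subseteq> UNIV - (V1 \<union> V2)"
    by (rule infinite_arbitrarily_large)
  then obtain Z where Z: "finite Z" "card Z = q - r" "Z \<subseteq> UNIV - (V1 \<union> V2)" by auto
  define U where "U = e \<union> Z"
  have fU: "finite U" unfolding U_def using fe Z(1) by simp
  have eZ: "e \<inter> Z = {}" using Z(3) eV1 by blast
  have cU: "card U = q" unfolding U_def using card_Un_disjoint[OF fe Z(1) eZ] ce Z(2) rq by simp
  have int1: "V1 \<inter> U = e" unfolding U_def using Z(3) eV1 by blast
  have int2: "U \<inter> V2 = e" unfolding U_def using Z(3) eV2 by blast
  define W1 where "W1 = V1 \<union> V2 \<union> Z"
  have fW1: "finite W1" unfolding W1_def using V1(1) V2(1) Z(1) by simp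
  obtain H1 F1 where H1: "finite F1" "F1 \<inter> W1 = {}" "\<forall>f\<in>H1. f \<subseteq> V1 \<union> U \<union> F1" "r_graph r H1"
      "H1 \<inter> (complete_rgraph r V1 \<union> complete_rgraph r U) = {}"
      "has_decomposition q r (H1 \<union> (complete_rgraph r V1 - {e}))"
      "has_decomposition q r (H1 \<union> (complete_rgraph r U - {e}))"
    using weak_hinge[OF inf r1 rq fW1 V1(1) fU V1(2) cU int1 ce] by blast
  define W2 where "W2 = V1 \<union> V2 \<union> Z \<union> F1"
  have fW2: "finite W2" unfolding W2_def using V1(1) V2(1) Z(1) H1(1) by simp
  obtain H2 F2 where H2: "finite F2" "F2 \<inter> W2 = {}" "\<forall>f\<in>H2. f \<subseteq> U \<union> V2 \<union> F2" "r_graph r H2"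
      "H2 \<inter> (complete_rgraph r U \<union> complete_rgraph r V2) = {}"
      "has_decomposition q r (H2 \<union> (complete_rgraph r U - {e}))"
      "has_decomposition q r (H2 \<union> (complete_rgraph r V2 - {e}))"
    using weak_hinge[OF inf r1 rq fW2 fU V2(1) cU V2(2) int2 ce] by blast
  define C where "C = complete_rgraph r U"
  define H where "H = H1 \<union> (C - {e}) \<union> H2"
  have cardH1: "\<And>f. f \<in> H1 \<Longrightarrow> card f = r" using H1(4) unfolding r_graph_def by blast
  have cardH2: "\<And>f. f \<in> H2 \<Longrightarrow> card f = r" using H2(4) unfolding r_graph_def by blast
  have cardC: "\<And>f. f \<in> C \<Longrightarrow> card f = r \<and> f \<subseteq> U" unfolding C_def complete_rgraph_def by blast
  have F1W: "F1 \<inter> (V1 \<union> V2 \<union> Z) = {}" using H1(2) unfolding W1_def .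
  have F2W: "F2 \<inter> (V1 \<union> V2 \<union> Z \<union> F1) = {}" using H2(2) unfolding W2_def .
  have H1V: "f \<subseteq> V1" if "f \<in> H1" "f \<subseteq> V1 \<union> V2" for f
  proof -
    have "f \<subseteq> V1 \<union> U \<union> F1" using H1(3) that(1) by blast
    then show ?thesis using that(2) F1W Z(3) eV1 unfolding U_def by blast
  qed
  have H2V: "f \<subseteq> V2" if "f \<in> H2" "f \<subseteq> V1 \<union> V2" for f
  proof -
    have "f \<subseteq> U \<union> V2 \<union> F2" using H2(3) that(1) by blast
    then show ?thesis using that(2) F2W Z(3) eV2 unfolding U_def by blast
  qed
  have CV: "f = e" if "f \<in> C" "f \<subseteq> V1 \<union> V2" for f
  proof -
    have "f \<subseteq> U" "card f = r" using cardC that(1) by auto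
    then have "f \<subseteq> e" using that(2) Z(3) unfolding U_def by blast
    then show ?thesis using sub_e \<open>card f = r\<close> ce fe by blast
  qed
  have notK1: "f \<notin> complete_rgraph r V1" if "f \<in> H1" for f using H1(5) that by blast
  have notK2: "f \<notin> complete_rgraph r V2" if "f \<in> H2" for f using H2(5) that by blast
  have inKV: "f \<subseteq> V" if "f \<in> complete_rgraph r V" for f V using that unfolding complete_rgraph_def by blast
  have finC: "finite C"
  proof -
    have "C \<subseteq> Pow U" using cardC by blast
    then show ?thesis by (rule finite_subset) (simp add: fU)
  qed
  have edgesC: "finite f \<and> card f = r" if "f \<in> C" for f
  proof -
    have "f \<subseteq> U" "card f = r" using cardC that by auto
    then show ?thesis using finite_subset[OF _ fU] by blast
  qed
  have rg: "r_graph r H"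
    unfolding r_graph_def
  proof
    have "finite H1" "finite H2" using H1(4) H2(4) unfolding r_graph_def by auto
    then show "finite H" unfolding H_def using finC by simp
    show "\<forall>f\<in>H. finite f \<and> card f = r"
    proof
      fix f assume "f \<in> H"
      then consider "f \<in> H1" | "f \<in> C" | "f \<in> H2" unfolding H_def by blast
      then show "finite f \<and> card f = r"
      proof cases
        case 1 then show ?thesis using H1(4) unfolding r_graph_def by blast
      next
        case 2 then show ?thesis using edgesC by blast
      next
        case 3 then show ?thesis using H2(4) unfolding r_graph_def by blast
      qed
    qed
  qed
  have dS: "H \<inter> (S1 \<union> S2) = {}"
  proof (rule ccontr)
    assume "H \<inter> (S1 \<union> S2) \<noteq> {}"
    then obtain f where f: "f \<in> H" "f \<in> S1 \<union> S2" by blast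
    have fK: "f \<in> complete_rgraph r V1 \<union> complete_rgraph r V2" using f(2) V1(3) V2(3) by simp
    then have fV: "f \<subseteq> V1 \<union> V2" and cf: "card f = r" unfolding complete_rgraph_def by auto
    show False
    proof (cases "f \<in> H1")
      case True
      have "f \<in> complete_rgraph r V1" using inK[OF H1V[OF True fV] cf] .
      then show False using notK1[OF True] by simp
    next
      case nH1: False
      show False
      proof (cases "f \<in> H2")
        case True
        have "f \<in> complete_rgraph r V2" using inK[OF H2V[OF True fV] cf] .
        then show False using notK2[OF True] by simp
      next
        case False
        then have "f \<in> C - {e}" using f(1) nH1 unfolding H_def by blast
        then show False using CV[OF _ fV] by simp
      qed
    qed
  qed
  have hU: "U \<subseteq> V1 \<union> Z" "U \<subseteq> V2 \<union> Z" "e \<subseteq> U" unfolding U_def using eV1 eV2 by auto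
  have hF1: "F1 \<inter> V2 = {}" "F1 \<inter> V1 = {}" "F1 \<inter> Z = {}" using F1W by auto
  have hF2: "F2 \<inter> V1 = {}" "F2 \<inter> V2 = {}" "F2 \<inter> F1 = {}" "F2 \<inter> Z = {}" using F2W by auto
  have hint: "x \<in> U" if "x \<in> V1" "x \<in> V2" for x using that int hU(3) by blast
  have inU: "f \<subseteq> U" if s1: "f \<subseteq> V1 \<union> U \<union> F1" and s2: "f \<subseteq> U \<union> V2 \<union> F2" for f
  proof
    fix x assume x: "x \<in> f"
    have a: "x \<in> V1 \<union> U \<union> F1" using s1 x by blast
    have b: "x \<in> U \<union> V2 \<union> F2" using s2 x by blast
    show "x \<in> U"
    proof (cases "x \<in> U")
      case True then show ?thesis .
    next
      case False
      then have a': "x \<in> V1 \<or> x \<in> F1" and b': "x \<in> V2 \<or> x \<in> F2" using a b by auto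
      show ?thesis
      proof (cases "x \<in> V1")
        case True
        then have "x \<notin> F2" using hF2(1) by blast
        then have "x \<in> V2" using b' by simp
        then show ?thesis using hint True by blast
      next
        case False
        then have "x \<in> F1" using a' by simp
        then have "x \<notin> F2" "x \<notin> V2" using hF2(3) hF1(1) by blast+
        then show ?thesis using b' by simp
      qed
    qed
  qed
  have eC: "f = e" if "f \<subseteq> e" "card f = r" for f using sub_e[OF that ce fe] .
  have dec1: "has_decomposition q r (H \<union> (S1 - {e}))"
  proof -
    have eq: "H \<union> (S1 - {e}) = (H1 \<union> (complete_rgraph r V1 - {e})) \<union> (H2 \<union> (C - {e}))"
      unfolding H_def V1(3) by blast
    have dj: "(H1 \<union> (complete_rgraph r V1 - {e})) \<inter> (H2 \<union> (C - {e})) = {}"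
    proof (rule ccontr)
      assume "(H1 \<union> (complete_rgraph r V1 - {e})) \<inter> (H2 \<union> (C - {e})) \<noteq> {}"
      then obtain f where f1: "f \<in> H1 \<union> (complete_rgraph r V1 - {e})" and f2: "f \<in> H2 \<union> (C - {e})" by blast
      have s1: "f \<subseteq> V1 \<union> U \<union> F1"
      proof (cases "f \<in> H1")
        case True then show ?thesis using H1(3) by blast
      next
        case False then have "f \<in> complete_rgraph r V1" using f1 by blast
        then show ?thesis using inKV by blast
      qed
      have s2: "f \<subseteq> U \<union> V2 \<union> F2"
      proof (cases "f \<in> H2")
        case True then show ?thesis using H2(3) by blast
      next
        case False then have "f \<in> C" using f2 by blast
        then show ?thesis using cardC by blast
      qed
      have cf: "card f = r"
      proof (cases "f \<in> H1")
        case True then show ?thesis using cardH1 by blast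
      next
        case False then have "f \<in> complete_rgraph r V1" using f1 by blast
        then show ?thesis unfolding complete_rgraph_def by simp
      qed
      have fU': "f \<subseteq> U" using inU[OF s1 s2] .
      have fC: "f \<in> C" unfolding C_def using inK[OF fU' cf] .
      show False
      proof (cases "f \<in> H1")
        case True then show False using H1(5) fC unfolding C_def by blast
      next
        case False
        then have fK: "f \<in> complete_rgraph r V1" and fne: "f \<noteq> e" using f1 by auto
        have "f \<subseteq> V1" using inKV[OF fK] .
        then have "f \<subseteq> e" using fU' int1 by blast
        then show False using eC cf fne by blast
      qed
    qed
    have "has_decomposition q r ((H1 \<union> (complete_rgraph r V1 - {e})) \<union> (H2 \<union> (C - {e})))"
      by (rule decomp_union[OF H1(6) H2(6)[folded C_def] dj])
    then show ?thesis unfolding eq .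
  qed
  have dec2: "has_decomposition q r (H \<union> (S2 - {e}))"
  proof -
    have eq: "H \<union> (S2 - {e}) = (H1 \<union> (C - {e})) \<union> (H2 \<union> (complete_rgraph r V2 - {e}))"
      unfolding H_def V2(3) by blast
    have dj: "(H1 \<union> (C - {e})) \<inter> (H2 \<union> (complete_rgraph r V2 - {e})) = {}"
    proof (rule ccontr)
      assume "(H1 \<union> (C - {e})) \<inter> (H2 \<union> (complete_rgraph r V2 - {e})) \<noteq> {}"
      then obtain f where f1: "f \<in> H1 \<union> (C - {e})" and f2: "f \<in> H2 \<union> (complete_rgraph r V2 - {e})" by blast
      have s1: "f \<subseteq> V1 \<union> U \<union> F1"
      proof (cases "f \<in> H1")
        case True then show ?thesis using H1(3) by blast
      next
        case False then have "f \<in> C" using f1 by blast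
        then show ?thesis using cardC by blast
      qed
      have s2: "f \<subseteq> U \<union> V2 \<union> F2"
      proof (cases "f \<in> H2")
        case True then show ?thesis using H2(3) by blast
      next
        case False then have "f \<in> complete_rgraph r V2" using f2 by blast
        then show ?thesis using inKV by blast
      qed
      have cf: "card f = r"
      proof (cases "f \<in> H2")
        case True then show ?thesis using cardH2 by blast
      next
        case False then have "f \<in> complete_rgraph r V2" using f2 by blast
        then show ?thesis unfolding complete_rgraph_def by simp
      qed
      have fU': "f \<subseteq> U" using inU[OF s1 s2] .
      have fC: "f \<in> C" unfolding C_def using inK[OF fU' cf] .
      show False
      proof (cases "f \<in> H2")
        case True then show False using H2(5) fC unfolding C_def by blast
      next
        case False
        then have fK: "f \<in> complete_rgraph r V2" and fne: "f \<noteq> e" using f2 by auto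
        have "f \<subseteq> V2" using inKV[OF fK] .
        then have "f \<subseteq> e" using fU' int2 by blast
        then show False using eC cf fne by blast
      qed
    qed
    have "has_decomposition q r ((H1 \<union> (C - {e})) \<union> (H2 \<union> (complete_rgraph r V2 - {e})))"
      by (rule decomp_union[OF H1(7)[folded C_def] H2(7) dj])
    then show ?thesis unfolding eq .
  qed
  have vS1: "vertices S1 \<subseteq> V1" unfolding vertices_def V1(3) complete_rgraph_def by blast
  have vS2: "vertices S2 \<subseteq> V2" unfolding vertices_def V2(3) complete_rgraph_def by blast
  have ind: "independent_in (vertices S1 \<union> vertices S2) H"
    unfolding independent_in_def
  proof
    fix f assume fH: "f \<in> H"
    show "\<not> f \<subseteq> vertices S1 \<union> vertices S2"
    proof
      assume "f \<subseteq> vertices S1 \<union> vertices S2"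
      then have fV: "f \<subseteq> V1 \<union> V2" using vS1 vS2 by blast
      show False
      proof (cases "f \<in> H1")
        case True
        have "f \<in> complete_rgraph r V1" using inK[OF H1V[OF True fV] cardH1[OF True]] .
        then show False using notK1[OF True] by simp
      next
        case nH1: False
        show False
        proof (cases "f \<in> H2")
          case True
          have "f \<in> complete_rgraph r V2" using inK[OF H2V[OF True fV] cardH2[OF True]] .
          then show False using notK2[OF True] by simp
        next
          case False
          then have "f \<in> C - {e}" using fH nH1 unfolding H_def by blast
          then show False using CV[OF _ fV] by simp
        qed
      qed
    qed
  qed
  have "is_hinge q r S1 S2 e H" unfolding is_hinge_def using rg dS dec1 dec2 by blast
  then show ?thesis using ind by blast
qed

end
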